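(* Let $(X,\mathcal{X},\mu)$ be a probability space, $(Y,\mathcal{Y})$ a measurable space, $f\colon X\to Y$ a measurable function, and $\mu_f=\mu\circ\mathit{pre}_f\colon\mathcal{Y}\to[0,1]$ the output probability measure. Let $\mathit{pre}^\sharp_f\colon\wp(Y)\to\wp(X)$ satisfy $\mathit{pre}_f(A)\subseteq\mathit{pre}^\sharp_f(A)$ for all $A\subseteq Y$, and let $\uparrow\colon\wp(X)\to\mathcal{X}$ be an abstraction. Define $\mu^\sharp_f=\mu\circ\uparrow\circ\,\mathit{pre}^\sharp_f$. Then $\mu_f(A)\le\mu^\sharp_f(A)$ for all $A\in\mathcal{Y}$, and if $\mathit{pre}^\sharp_f$ and $\uparrow$ are monotone then $\mu^\sharp_f$ is monotone.
   Context: For $f\colon X\to Y$, $\mathit{pre}_f(B)=\{x\in X\mid f(x)\in B\}$; $f$ is measurable if $\mathit{pre}_f(B)\in\mathcal{X}$ for all $B\in\mathcal{Y}$. An abstraction is a function $\uparrow\colon\wp(X)\to\mathcal{X}$ with $S\subseteq\,\uparrow(S)$ for all $S\subseteq X$. A set function $g$ is monotone if $A\subseteq B$ implies $g(A)\subseteq g(B)$ (resp. $g(A)\le g(B)$ for real-valued $g$). *)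

theory Defs
  imports "HOL-Probability.Probability"
begin

definition pre :: "'a measure \<Rightarrow> ('a \<Rightarrow> 'b) \<Rightarrow> 'b set \<Rightarrow> 'a set" where
  "pre M f B = {x \<in> space M. f x \<in> B}"

definition abstraction :: "'a measure \<Rightarrow> ('a set \<Rightarrow> 'a set) \<Rightarrow> bool" where
  "abstraction M up \<longleftrightarrow> (\<forall>S. S \<subseteq> space M \<longrightarrow> up S \<in> sets M \<and> S \<subseteq> up S)"

definition set_mono_on :: "'b set \<Rightarrow> ('b set \<Rightarrow> 'c set) \<Rightarrow> bool" where
  "set_mono_on Y g \<longleftrightarrow> (\<forall>A B. A \<subseteq> B \<and> B \<subseteq> Y \<longrightarrow> g A \<subseteq> g B)"

definition mu_sharp :: "'a measure \<Rightarrow> ('a set \<Rightarrow> 'a set) \<Rightarrow> ('b set \<Rightarrow> 'a set) \<Rightarrow> 'b set \<Rightarrow> real" where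
  "mu_sharp M up pre_s A = measure M (up (pre_s A))"

end

theory Submission
  imports Defs
begin

theorem theorem1:
  fixes M :: "'a measure" and N :: "'b measure" and f :: "'a \<Rightarrow> 'b"
    and pre_s :: "'b set \<Rightarrow> 'a set" and up :: "'a set \<Rightarrow> 'a set"
  assumes "prob_space M"
    and "f \<in> measurable M N"
    and "\<forall>A. A \<subseteq> space N \<longrightarrow> pre_s A \<subseteq> space M"
    and "\<forall>A. A \<subseteq> space N \<longrightarrow> pre M f A \<subseteq> pre_s A"
    and "abstraction M up"
  shows "(\<forall>A \<in> sets N. measure M (pre M f A) \<le> mu_sharp M up pre_s A)
    \<and> (set_mono_on (space N) pre_s \<and> set_mono_on (space M) up \<longrightarrow>
        (\<forall>A B. A \<subseteq> B \<and> B \<subseteq> space N \<longrightarrow> mu_sharp M up pre_s A \<le> mu_sharp M up pre_s B))"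
proof -
  interpret P: prob_space M by fact
  have part1: "\<forall>A \<in> sets N. measure M (pre M f A) \<le> mu_sharp M up pre_s A"
  proof
    fix A assume A: "A \<in> sets N"
    have AN: "A \<subseteq> space N" using A sets.sets_into_space by blast
    have m: "pre M f A \<in> sets M"
      using measurable_sets[OF assms(2) A] unfolding pre_def by (simp add: vimage_def Int_def conj_commute)
    have s: "pre_s A \<subseteq> space M" using assms(3) AN by blast
    have u: "up (pre_s A) \<in> sets M" "pre_s A \<subseteq> up (pre_s A)"
      using assms(5) s unfolding abstraction_def by auto
    have "pre M f A \<subseteq> up (pre_s A)" using assms(4) AN u(2) by blast
    then show "measure M (pre M f A) \<le> mu_sharp M up pre_s A"
      unfolding mu_sharp_def using P.finite_measure_mono u(1) by blast
  qed
  have part2: "set_mono_on (space N) pre_s \<and> set_mono_on (space M) up \<longrightarrow>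
        (\<forall>A B. A \<subseteq> B \<and> B \<subseteq> space N \<longrightarrow> mu_sharp M up pre_s A \<le> mu_sharp M up pre_s B)"
  proof (intro impI allI)
    fix A B assume mo: "set_mono_on (space N) pre_s \<and> set_mono_on (space M) up"
      and AB: "A \<subseteq> B \<and> B \<subseteq> space N"
    have "pre_s A \<subseteq> pre_s B" using mo AB unfolding set_mono_on_def by blast
    moreover have "pre_s B \<subseteq> space M" using assms(3) AB by blast
    ultimately have "up (pre_s A) \<subseteq> up (pre_s B)" using mo unfolding set_mono_on_def by blast
    moreover have "up (pre_s B) \<in> sets M"
      using assms(5) \<open>pre_s B \<subseteq> space M\<close> unfolding abstraction_def by auto
    ultimately show "mu_sharp M up pre_s A \<le> mu_sharp M up pre_s B"
      unfolding mu_sharp_def using P.finite_measure_mono by blast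
  qed
  show ?thesis using part1 part2 by blast
qed

end
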